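(* Let $V$ be a finite-dimensional real vector space, $\phi\in\mathrm{End}(V)\setminus\{0\}$, $W=\mathrm{im}(\phi)$, and $\mathfrak{g}=\mathfrak{g}_\phi$. A function $\zeta:\mathfrak{g}\to\mathbb{R}$ is a Lie quasi-state with canonical character $\alpha\in V^*$ if and only if there is a function $c:W\to\mathbb{R}$ such that \[\zeta(v,t)=\begin{cases} c(\phi(v)/t)\cdot t+\alpha(v), & t\neq 0,\\ \alpha(v), & t=0.\end{cases}\] The Lie quasi-state so defined is continuous if and only if $c$ is continuous and sublinear (i.e. $c(w)/\|w\|\to 0$ as $w\to\infty$).
   Context: $\mathfrak{g}_\phi$ is the Lie algebra $V\times\mathbb{R}$ with bracket $[(v,s),(w,t)]=(s\phi(w)-t\phi(v),0)$, i.e. $V\rtimes\mathbb{R}$ where the generator $1\in\mathbb{R}$ acts on the abelian ideal $V$ by $\phi$. A Lie quasi-state is $\zeta:\mathfrak{g}\to\mathbb{R}$ with $\zeta(aX+bY)=a\zeta(X)+b\zeta(Y)$ for all $a,b\in\mathbb{R}$ and commuting $X,Y$. The canonical character of $\zeta$ is the linear functional $\zeta_V\in V^*$, $\zeta_V(v)=\zeta(v,0)$. *)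

theory Defs
  imports "HOL-Analysis.Analysis"
begin

text \<open>The Lie algebra g_phi = V x R, with V modelled by a finite-dimensional real
normed space (euclidean_space, carrying its unique vector topology).\<close>

definition gphi_bracket :: "('v::euclidean_space \<Rightarrow> 'v) \<Rightarrow> 'v \<times> real \<Rightarrow> 'v \<times> real \<Rightarrow> 'v \<times> real" where
  "gphi_bracket \<phi> X Y = (snd X *\<^sub>R \<phi> (fst Y) - snd Y *\<^sub>R \<phi> (fst X), 0)"

definition gphi_commute :: "('v::euclidean_space \<Rightarrow> 'v) \<Rightarrow> 'v \<times> real \<Rightarrow> 'v \<times> real \<Rightarrow> bool" where
  "gphi_commute \<phi> X Y \<longleftrightarrow> gphi_bracket \<phi> X Y = 0"

definition lie_quasi_state :: "('v::euclidean_space \<Rightarrow> 'v) \<Rightarrow> ('v \<times> real \<Rightarrow> real) \<Rightarrow> bool" where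
  "lie_quasi_state \<phi> \<zeta> \<longleftrightarrow>
     (\<forall>X Y a b. gphi_commute \<phi> X Y \<longrightarrow> \<zeta> (a *\<^sub>R X + b *\<^sub>R Y) = a * \<zeta> X + b * \<zeta> Y)"

definition canonical_character :: "('v::euclidean_space \<times> real \<Rightarrow> real) \<Rightarrow> 'v \<Rightarrow> real" where
  "canonical_character \<zeta> = (\<lambda>v. \<zeta> (v, 0))"

definition zeta_of :: "('v::euclidean_space \<Rightarrow> 'v) \<Rightarrow> ('v \<Rightarrow> real) \<Rightarrow> ('v \<Rightarrow> real) \<Rightarrow> 'v \<times> real \<Rightarrow> real" where
  "zeta_of \<phi> c \<alpha> = (\<lambda>(v, t). if t \<noteq> 0 then c (\<phi> v /\<^sub>R t) * t + \<alpha> v else \<alpha> v)"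

end

theory Submission
  imports Defs
begin


lemma qs_scale:
  assumes "lie_quasi_state \<phi> \<zeta>"
  shows "\<zeta> (a *\<^sub>R X) = a * \<zeta> X"
proof -
  have "gphi_commute \<phi> X X" by (simp add: gphi_commute_def gphi_bracket_def zero_prod_def)
  with assms have "\<zeta> (a *\<^sub>R X + 0 *\<^sub>R X) = a * \<zeta> X + 0 * \<zeta> X"
    unfolding lie_quasi_state_def by blast
  then show ?thesis by simp
qed

lemma qs_forward:
  fixes \<phi> :: "'v::euclidean_space \<Rightarrow> 'v"
  assumes lin: "linear \<phi>" and la: "linear \<alpha>" and q: "lie_quasi_state \<phi> \<zeta>"
    and cc: "canonical_character \<zeta> = \<alpha>"
  shows "\<zeta> = zeta_of \<phi> (\<lambda>w. \<zeta> ((SOME u. \<phi> u = w), 1) - \<alpha> (SOME u. \<phi> u = w)) \<alpha>"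
proof
  fix p :: "'v \<times> real"
  obtain v t where p: "p = (v, t)" by (cases p)
  have a0: "\<zeta> (x, 0) = \<alpha> x" for x using cc unfolding canonical_character_def by meson
  have key: "\<zeta> (u', 1) - \<alpha> u' = \<zeta> (u, 1) - \<alpha> u" if "\<phi> u' = \<phi> u" for u u'
  proof -
    have "\<phi> (u' - u) = 0" using that lin by (simp add: linear_diff)
    then have "gphi_commute \<phi> (u, 1) (u' - u, 0)"
      by (simp add: gphi_commute_def gphi_bracket_def zero_prod_def)
    with q have "\<zeta> (1 *\<^sub>R (u, 1) + 1 *\<^sub>R (u' - u, 0)) = 1 * \<zeta> (u, 1) + 1 * \<zeta> (u' - u, 0)"
      unfolding lie_quasi_state_def by blast
    then have "\<zeta> (u', 1) = \<zeta> (u, 1) + \<alpha> (u' - u)" by (simp add: a0)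
    then show ?thesis using la by (simp add: linear_diff)
  qed
  show "\<zeta> p = zeta_of \<phi> (\<lambda>w. \<zeta> ((SOME u. \<phi> u = w), 1) - \<alpha> (SOME u. \<phi> u = w)) \<alpha> p"
  proof (cases "t = 0")
    case True
    then show ?thesis by (simp add: p zeta_of_def a0)
  next
    case False
    define u where "u = (SOME u. \<phi> u = \<phi> v /\<^sub>R t)"
    have "\<phi> (v /\<^sub>R t) = \<phi> v /\<^sub>R t" using lin by (simp add: linear_scale)
    then have hu: "\<phi> u = \<phi> v /\<^sub>R t" unfolding u_def by (metis (mono_tags) someI)
    have "\<phi> u = \<phi> (v /\<^sub>R t)" using hu lin by (simp add: linear_scale)
    then have k: "\<zeta> (u, 1) - \<alpha> u = \<zeta> (v /\<^sub>R t, 1) - \<alpha> (v /\<^sub>R t)" by (rule key)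
    have "(v, t) = t *\<^sub>R (v /\<^sub>R t, 1)" using False by simp
    then have "\<zeta> (v, t) = t * \<zeta> (v /\<^sub>R t, 1)" using qs_scale[OF q] by metis
    moreover have "\<alpha> (v /\<^sub>R t) = \<alpha> v / t" using la by (simp add: linear_scale divide_inverse_commute)
    moreover have "zeta_of \<phi> (\<lambda>w. \<zeta> ((SOME u. \<phi> u = w), 1) - \<alpha> (SOME u. \<phi> u = w)) \<alpha> (v, t)
       = t * (\<zeta> (u, 1) - \<alpha> u) + \<alpha> v" using False by (simp add: zeta_of_def u_def)
    ultimately show ?thesis using False k
      unfolding p by (simp add: field_simps)
  qed
qed

lemma qs_backward:
  fixes \<phi> :: "'v::euclidean_space \<Rightarrow> 'v"
  assumes lin: "linear \<phi>" and la: "linear \<alpha>"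
  shows "lie_quasi_state \<phi> (zeta_of \<phi> c \<alpha>) \<and> canonical_character (zeta_of \<phi> c \<alpha>) = \<alpha>"
proof
  show "canonical_character (zeta_of \<phi> c \<alpha>) = \<alpha>"
    by (simp add: canonical_character_def zeta_of_def)
  have ph: "\<phi> (a *\<^sub>R x + b *\<^sub>R y) = a *\<^sub>R \<phi> x + b *\<^sub>R \<phi> y" for a b x y
    using lin by (simp add: linear_add linear_scale)
  have al: "\<alpha> (a *\<^sub>R x + b *\<^sub>R y) = a * \<alpha> x + b * \<alpha> y" for a b x y
    using la by (simp add: linear_add linear_scale)
  show "lie_quasi_state \<phi> (zeta_of \<phi> c \<alpha>)"
    unfolding lie_quasi_state_def
  proof (intro allI impI)
    fix X Y :: "'v \<times> real" and a b :: real
    assume "gphi_commute \<phi> X Y"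
    obtain v s w t where X: "X = (v, s)" and Y: "Y = (w, t)" by (cases X, cases Y)
    have com: "s *\<^sub>R \<phi> w = t *\<^sub>R \<phi> v"
      using \<open>gphi_commute \<phi> X Y\<close> by (simp add: gphi_commute_def gphi_bracket_def zero_prod_def X Y)
    show "zeta_of \<phi> c \<alpha> (a *\<^sub>R X + b *\<^sub>R Y) = a * zeta_of \<phi> c \<alpha> X + b * zeta_of \<phi> c \<alpha> Y"
    proof (cases "s = 0")
      case s0: True
      show ?thesis
      proof (cases "t = 0")
        case True
        then show ?thesis using s0 by (simp add: X Y zeta_of_def al)
      next
        case False
        then have pv: "\<phi> v = 0" using com s0 by simp
        show ?thesis
        proof (cases "b = 0")
          case True then show ?thesis using s0 by (simp add: X Y zeta_of_def al linear_scale[OF la])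
        next
          case False
          have "\<phi> (a *\<^sub>R v + b *\<^sub>R w) /\<^sub>R (b * t) = \<phi> w /\<^sub>R t"
            using False \<open>t \<noteq> 0\<close> by (simp add: ph pv)
          then show ?thesis using s0 False \<open>t \<noteq> 0\<close> by (simp add: X Y zeta_of_def al algebra_simps)
        qed
      qed
    next
      case s1: False
      show ?thesis
      proof (cases "t = 0")
        case True
        then have pw: "\<phi> w = 0" using com s1 by simp
        show ?thesis
        proof (cases "a = 0")
          case True then show ?thesis using \<open>t = 0\<close> by (simp add: X Y zeta_of_def al linear_scale[OF la])
        next
          case False
          have "\<phi> (a *\<^sub>R v + b *\<^sub>R w) /\<^sub>R (a * s) = \<phi> v /\<^sub>R s"
            using False s1 by (simp add: ph pw)
          then show ?thesis using \<open>t = 0\<close> False s1 by (simp add: X Y zeta_of_def al algebra_simps)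
        qed
      next
        case t1: False
        define p where "p = \<phi> v /\<^sub>R s"
        have pw: "\<phi> w /\<^sub>R t = p" unfolding p_def using com s1 t1
          by (metis (no_types, lifting) divideR_right scaleR_scaleR mult.commute)
        have pv: "\<phi> v = s *\<^sub>R p" using s1 by (simp add: p_def)
        have pw': "\<phi> w = t *\<^sub>R p" using t1 pw by (metis divideR_right)
        show ?thesis
        proof (cases "a * s + b * t = 0")
          case True
          then show ?thesis using s1 t1
            by (simp add: X Y zeta_of_def al p_def[symmetric] pw algebra_simps)
             (metis (no_types) distrib_left mult.assoc mult.commute mult_zero_left True)
        next
          case False
          have "\<phi> (a *\<^sub>R v + b *\<^sub>R w) /\<^sub>R (a * s + b * t) = p"
            using False by (simp add: ph pv pw' scaleR_add_left[symmetric])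
          then show ?thesis using s1 t1 False
            by (simp add: X Y zeta_of_def al p_def[symmetric] pw algebra_simps)
        qed
      qed
    qed
  qed
qed


lemma lin_cont: "linear (f::'a::euclidean_space \<Rightarrow> 'b::real_normed_vector) \<Longrightarrow> continuous_on S f"
  by (simp add: linear_continuous_on linear_linear)

lemma c_bound:
  fixes \<phi> :: "'v::euclidean_space \<Rightarrow> 'v"
  assumes lin: "linear \<phi>" and cc: "continuous_on (range \<phi>) c"
    and tl: "((\<lambda>w. c w / norm w) \<longlongrightarrow> 0) (inf at_infinity (principal (range \<phi>)))"
    and ep: "\<epsilon> > 0"
  obtains M where "M \<ge> 0" "\<And>v t. t \<noteq> 0 \<Longrightarrow> \<bar>c (\<phi> v /\<^sub>R t) * t\<bar> \<le> \<epsilon> * norm (\<phi> v) + M * \<bar>t\<bar>"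
proof -
  have "\<forall>\<^sub>F w in inf at_infinity (principal (range \<phi>)). dist (c w / norm w) 0 < \<epsilon>"
    using tl ep by (rule tendstoD)
  then obtain b where hb: "\<And>w. b \<le> norm w \<Longrightarrow> w \<in> range \<phi> \<Longrightarrow> \<bar>c w / norm w\<bar> < \<epsilon>"
    unfolding eventually_inf_principal eventually_at_infinity dist_real_def by auto
  define R where "R = max b 1"
  define S where "S = cball (0::'v) R \<inter> range \<phi>"
  have "subspace (range \<phi>)"
    by (rule real_vector.linear_subspace_image[OF lin real_vector.subspace_UNIV])
  then have "closed (range \<phi>)" by (rule closed_subspace)
  then have cS: "compact S" unfolding S_def by (intro compact_Int_closed compact_cball)
  have "continuous_on S c" using cc by (rule continuous_on_subset) (auto simp: S_def)
  then have "compact (c ` S)" using cS by (rule compact_continuous_image)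
  then have "bounded (c ` S)" by (rule compact_imp_bounded)
  then obtain M0 where M0: "\<And>y. y \<in> c ` S \<Longrightarrow> norm y \<le> M0"
    unfolding bounded_iff by blast
  define M where "M = max M0 0"
  have M: "\<bar>c w\<bar> \<le> M" if "w \<in> range \<phi>" "norm w \<le> R" for w
  proof -
    have "w \<in> S" using that by (simp add: S_def)
    then have "norm (c w) \<le> M0" using M0 by blast
    then show ?thesis by (simp add: M_def)
  qed
  show ?thesis
  proof (rule that[of M])
    show "M \<ge> 0" by (simp add: M_def)
    fix v t assume t: "(t::real) \<noteq> 0"
    define w where "w = \<phi> v /\<^sub>R t"
    have wr: "w \<in> range \<phi>" unfolding w_def using lin by (metis linear_scale rangeI)
    have nw: "norm w * \<bar>t\<bar> = norm (\<phi> v)" using t by (simp add: w_def)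
    show "\<bar>c (\<phi> v /\<^sub>R t) * t\<bar> \<le> \<epsilon> * norm (\<phi> v) + M * \<bar>t\<bar>"
    proof (cases "norm w \<le> R")
      case True
      then have "\<bar>c w\<bar> * \<bar>t\<bar> \<le> M * \<bar>t\<bar>" using M[OF wr] by (simp add: mult_right_mono)
      moreover have "0 \<le> \<epsilon> * norm (\<phi> v)" using ep by simp
      ultimately show ?thesis by (simp add: w_def[symmetric] abs_mult)
    next
      case False
      then have "b \<le> norm w" "norm w > 0" by (auto simp: R_def)
      then have "\<bar>c w\<bar> / norm w < \<epsilon>" using hb[OF _ wr] by simp
      then have "\<bar>c w\<bar> \<le> \<epsilon> * norm w" using \<open>norm w > 0\<close> by (simp add: field_simps)
      then have "\<bar>c w\<bar> * \<bar>t\<bar> \<le> \<epsilon> * norm w * \<bar>t\<bar>" by (simp add: mult_right_mono)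
      also have "\<dots> = \<epsilon> * norm (\<phi> v)" using nw by (simp add: mult.assoc)
      finally have "\<bar>c w\<bar> * \<bar>t\<bar> \<le> \<epsilon> * norm (\<phi> v)" .
      moreover have "0 \<le> M * \<bar>t\<bar>" by (simp add: M_def)
      ultimately show ?thesis by (simp add: w_def[symmetric] abs_mult)
    qed
  qed
qed

lemma cont_zero:
  fixes \<phi> :: "'v::euclidean_space \<Rightarrow> 'v"
  assumes lin: "linear \<phi>" and la: "linear \<alpha>" and cc: "continuous_on (range \<phi>) c"
    and tl: "((\<lambda>w. c w / norm w) \<longlongrightarrow> 0) (inf at_infinity (principal (range \<phi>)))"
  shows "isCont (zeta_of \<phi> c \<alpha>) (v0, 0)"
  unfolding continuous_at_eps_delta
proof (intro allI impI)
  fix e :: real assume e: "e > 0"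
  obtain Bp where Bp: "Bp > 0" "\<And>x. norm (\<phi> x) \<le> Bp * norm x"
    using linear_bounded_pos[OF lin] by metis
  obtain Ba where Ba: "Ba > 0" "\<And>x. norm (\<alpha> x) \<le> Ba * norm x"
    using linear_bounded_pos[OF la] by metis
  define \<epsilon> where "\<epsilon> = e / (3 * Bp * (norm v0 + 1))"
  have "norm v0 + 1 > 0" by (simp add: add_nonneg_pos)
  then have ep: "\<epsilon> > 0" using e Bp unfolding \<epsilon>_def by (intro divide_pos_pos mult_pos_pos) auto
  obtain M where M: "M \<ge> 0" "\<And>v t. t \<noteq> 0 \<Longrightarrow> \<bar>c (\<phi> v /\<^sub>R t) * t\<bar> \<le> \<epsilon> * norm (\<phi> v) + M * \<bar>t\<bar>"
    using c_bound[OF lin cc tl ep] by metis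
  define d where "d = min 1 (min (e / (3 * Ba)) (e / (3 * (M + 1))))"
  have d: "d > 0" using e Ba M by (simp add: d_def)
  have "dist (zeta_of \<phi> c \<alpha> p) (zeta_of \<phi> c \<alpha> (v0, 0)) < e" if hp: "dist p (v0, 0) < d" for p
  proof -
    obtain v t where p: "p = (v, t)" by (cases p)
    have dv: "norm (v - v0) < d" using dist_fst_le[of p "(v0, 0)"] hp by (simp add: p dist_norm)
    have dt: "\<bar>t\<bar> < d" using dist_snd_le[of p "(v0, 0)"] hp by (simp add: p dist_real_def)
    define h where "h = (if t \<noteq> 0 then c (\<phi> v /\<^sub>R t) * t else 0)"
    have zeq: "zeta_of \<phi> c \<alpha> p = \<alpha> v + h" by (simp add: p zeta_of_def h_def)
    have z0: "zeta_of \<phi> c \<alpha> (v0, 0) = \<alpha> v0" by (simp add: zeta_of_def)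
    have hb: "\<bar>h\<bar> \<le> \<epsilon> * norm (\<phi> v) + M * \<bar>t\<bar>"
      using M ep by (auto simp: h_def)
    have "\<bar>\<alpha> v - \<alpha> v0\<bar> = \<bar>\<alpha> (v - v0)\<bar>" using la by (simp add: linear_diff)
    also have "\<dots> \<le> Ba * norm (v - v0)" using Ba(2)[of "v - v0"] by simp
    also have "\<dots> < Ba * d" using dv Ba by simp
    also have "\<dots> \<le> Ba * (e / (3 * Ba))" using Ba unfolding d_def by (intro mult_left_mono) auto
    also have "\<dots> = e / 3" using Ba by simp
    finally have t1: "\<bar>\<alpha> v - \<alpha> v0\<bar> < e / 3" .
    have "norm v \<le> norm v0 + norm (v - v0)" by (metis add.commute diff_add_cancel norm_triangle_ineq)
    then have nv: "norm v \<le> norm v0 + 1" using dv d_def by linarith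
    have "norm (\<phi> v) \<le> Bp * (norm v0 + 1)"
      using Bp(2)[of v] mult_left_mono[OF nv, of Bp] Bp(1) by linarith
    then have "\<epsilon> * norm (\<phi> v) \<le> \<epsilon> * (Bp * (norm v0 + 1))" using ep by (simp add: mult_left_mono)
    also have "\<dots> = e / 3"
    proof -
      have nz: "Bp * (norm v0 + 1) \<noteq> 0" using Bp(1) \<open>norm v0 + 1 > 0\<close> by simp
      show ?thesis unfolding \<epsilon>_def mult.assoc using nz by simp
    qed
    finally have t2: "\<epsilon> * norm (\<phi> v) \<le> e / 3" .
    have "M * \<bar>t\<bar> \<le> M * d" using dt M(1) by (simp add: mult_left_mono)
    also have "\<dots> \<le> M * (e / (3 * (M + 1)))" using M(1) unfolding d_def by (intro mult_left_mono) auto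
    also have "\<dots> < e / 3" using M(1) e by (simp add: field_simps)
    finally have t3: "M * \<bar>t\<bar> < e / 3" .
    have "dist (zeta_of \<phi> c \<alpha> p) (zeta_of \<phi> c \<alpha> (v0, 0)) = \<bar>(\<alpha> v - \<alpha> v0) + h\<bar>"
      by (simp add: zeq z0 dist_real_def algebra_simps)
    also have "\<dots> \<le> \<bar>\<alpha> v - \<alpha> v0\<bar> + \<bar>h\<bar>" by (rule abs_triangle_ineq)
    also have "\<dots> < e" using t1 t2 t3 hb by linarith
    finally show ?thesis .
  qed
  then show "\<exists>d>0. \<forall>x'. dist x' (v0, 0) < d \<longrightarrow> dist (zeta_of \<phi> c \<alpha> x') (zeta_of \<phi> c \<alpha> (v0, 0)) < e"
    using d by blast
qed


lemma cont_backward: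
  fixes \<phi> :: "'v::euclidean_space \<Rightarrow> 'v"
  assumes lin: "linear \<phi>" and la: "linear \<alpha>" and cc: "continuous_on (range \<phi>) c"
    and tl: "((\<lambda>w. c w / norm w) \<longlongrightarrow> 0) (inf at_infinity (principal (range \<phi>)))"
  shows "continuous_on UNIV (zeta_of \<phi> c \<alpha>)"
proof (rule continuous_at_imp_continuous_on, intro ballI)
  fix p :: "'v \<times> real"
  obtain v0 t0 where p: "p = (v0, t0)" by (cases p)
  show "isCont (zeta_of \<phi> c \<alpha>) p"
  proof (cases "t0 = 0")
    case True
    then show ?thesis using cont_zero[OF lin la cc tl] by (simp add: p)
  next
    case False
    define S where "S = {q :: 'v \<times> real. snd q \<noteq> 0}"
    have oS: "open S" unfolding S_def
      by (rule open_Collect_neq) (intro continuous_intros)+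
    have pS: "p \<in> S" using False by (simp add: S_def p)
    define F where "F = (\<lambda>q :: 'v \<times> real. c (inverse (snd q) *\<^sub>R \<phi> (fst q)) * snd q + \<alpha> (fst q))"
    have i1: "continuous_on S (\<lambda>q :: 'v \<times> real. inverse (snd q) *\<^sub>R \<phi> (fst q))"
    proof (intro continuous_on_scaleR continuous_on_inverse)
      show "continuous_on S (\<lambda>q::'v \<times> real. snd q)" by (intro continuous_intros)
      show "\<forall>x\<in>S. snd x \<noteq> 0" by (simp add: S_def)
      show "continuous_on S (\<lambda>q::'v \<times> real. \<phi> (fst q))"
        by (rule continuous_on_compose2[OF lin_cont[OF lin, of UNIV]]) (auto intro: continuous_intros)
    qed
    have i2: "(\<lambda>q :: 'v \<times> real. inverse (snd q) *\<^sub>R \<phi> (fst q)) ` S \<subseteq> range \<phi>"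
      using lin by (auto simp: linear_scale[OF lin, symmetric])
    have cF: "continuous_on S F" unfolding F_def
    proof (intro continuous_on_add continuous_on_mult)
      show "continuous_on S (\<lambda>q. c (inverse (snd q) *\<^sub>R \<phi> (fst q)))"
        by (rule continuous_on_compose2[OF cc i1 i2])
      show "continuous_on S (\<lambda>q::'v \<times> real. snd q)" by (intro continuous_intros)
      show "continuous_on S (\<lambda>q::'v \<times> real. \<alpha> (fst q))"
        by (rule continuous_on_compose2[OF lin_cont[OF la, of UNIV]]) (auto intro: continuous_intros)
    qed
    have "continuous_on S (zeta_of \<phi> c \<alpha>)"
      by (rule continuous_on_eq[OF cF]) (auto simp: S_def F_def zeta_of_def split: prod.splits)
    then show ?thesis using oS pS continuous_on_eq_continuous_at by blast
  qed
qed

lemma cont_forward: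
  fixes \<phi> :: "'v::euclidean_space \<Rightarrow> 'v"
  assumes lin: "linear \<phi>" and la: "linear \<alpha>"
    and cz: "continuous_on UNIV (zeta_of \<phi> c \<alpha>)"
  shows "continuous_on (range \<phi>) c \<and>
             ((\<lambda>w. c w / norm w) \<longlongrightarrow> 0) (inf at_infinity (principal (range \<phi>)))"
proof -
  let ?z = "zeta_of \<phi> c \<alpha>"
  obtain g where lg: "linear g" and gi: "\<forall>w\<in>range \<phi>. \<phi> (g w) = w"
    using real_vector.linear_exists_right_inverse_on[OF lin real_vector.subspace_UNIV] by auto
  have cw: "c w = ?z (g w, 1) - \<alpha> (g w)" if "w \<in> range \<phi>" for w
  proof -
    have "\<phi> (g w) = w" using gi that by blast
    then show ?thesis by (simp add: zeta_of_def)
  qed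
  have p1: "continuous_on (range \<phi>) (\<lambda>w. (g w, 1::real))"
    by (intro continuous_on_Pair lin_cont[OF lg] continuous_on_const)
  have p2: "continuous_on (range \<phi>) (\<lambda>w. ?z (g w, 1))"
    by (rule continuous_on_compose2[OF cz p1]) simp
  have p3: "continuous_on (range \<phi>) (\<lambda>w. \<alpha> (g w))"
    by (rule continuous_on_compose2[OF lin_cont[OF la, of UNIV] lin_cont[OF lg]]) simp
  have "continuous_on (range \<phi>) (\<lambda>w. ?z (g w, 1) - \<alpha> (g w))"
    by (rule continuous_on_diff[OF p2 p3])
  then have c1: "continuous_on (range \<phi>) c"
    by (rule continuous_on_eq) (simp add: cw)
  obtain B where B: "B > 0" "\<And>x. norm (g x) \<le> B * norm x"
    using linear_bounded_pos[OF lg] by metis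
  define K where "K = cball (0::'v) B \<times> cball (0::real) 1"
  have "uniformly_continuous_on K ?z"
    by (rule compact_uniformly_continuous[OF continuous_on_subset[OF cz]])
       (auto simp: K_def intro: compact_Times)
  then have uc: "\<forall>e>0. \<exists>d>0. \<forall>x\<in>K. \<forall>x'\<in>K. dist x' x < d \<longrightarrow> dist (?z x') (?z x) < e"
    unfolding uniformly_continuous_on_def .
  have "((\<lambda>w. c w / norm w) \<longlongrightarrow> 0) (inf at_infinity (principal (range \<phi>)))"
  proof (rule tendstoI)
    fix e :: real assume "e > 0"
    then obtain d where d: "d > 0" and hd: "\<forall>x\<in>K. \<forall>x'\<in>K. dist x' x < d \<longrightarrow> dist (?z x') (?z x) < e"
      using uc by blast
    have "dist (c w / norm w) 0 < e" if w: "w \<in> range \<phi>" "max 1 (2 / d) \<le> norm w" for w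
    proof -
      define n where "n = norm w"
      have n1: "n \<ge> 1" and n2: "2 / d \<le> n" using w by (auto simp: n_def)
      have npos: "n > 0" using n1 by simp
      define x where "x = (g w /\<^sub>R n, 0::real)"
      define x' where "x' = (g w /\<^sub>R n, 1 / n)"
      have "norm (g w /\<^sub>R n) \<le> B" using B(2)[of w] npos by (simp add: n_def field_simps)
      then have inK: "x \<in> K" "x' \<in> K" using n1 unfolding K_def x_def x'_def by auto
      have "1 / n < d" using n2 d npos by (simp add: field_simps)
      moreover have "dist x' x = 1 / n" using npos by (simp add: x_def x'_def dist_Pair_Pair)
      ultimately have "dist (?z x') (?z x) < e" using hd inK by simp
      moreover have hw: "n *\<^sub>R \<phi> (g w /\<^sub>R n) = w"
      proof -
        have "\<phi> (g w) = w" using gi w(1) by blast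
        then show ?thesis using npos lin by (simp add: linear_scale)
      qed
      moreover have "?z x' = c w * (1 / n) + \<alpha> (g w /\<^sub>R n)"
        using npos by (simp add: x'_def zeta_of_def hw)
      moreover have "?z x = \<alpha> (g w /\<^sub>R n)" by (simp add: x_def zeta_of_def)
      ultimately show ?thesis unfolding n_def dist_real_def by simp
    qed
    then show "\<forall>\<^sub>F w in inf at_infinity (principal (range \<phi>)). dist (c w / norm w) 0 < e"
      unfolding eventually_inf_principal eventually_at_infinity by blast
  qed
  with c1 show ?thesis by blast
qed

theorem mainTheorem9:
  fixes \<phi> :: "'v::euclidean_space \<Rightarrow> 'v" and \<alpha> :: "'v \<Rightarrow> real"
  assumes "linear \<phi>" and "\<phi> \<noteq> (\<lambda>v. 0)" and "linear \<alpha>"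
  shows "(\<forall>\<zeta>. (lie_quasi_state \<phi> \<zeta> \<and> canonical_character \<zeta> = \<alpha>) \<longleftrightarrow>
            (\<exists>c. \<zeta> = zeta_of \<phi> c \<alpha>))
       \<and> (\<forall>c. continuous_on UNIV (zeta_of \<phi> c \<alpha>) \<longleftrightarrow>
            (continuous_on (range \<phi>) c \<and>
             ((\<lambda>w. c w / norm w) \<longlongrightarrow> 0) (inf at_infinity (principal (range \<phi>)))))"
proof (rule conjI)
  show "\<forall>\<zeta>. (lie_quasi_state \<phi> \<zeta> \<and> canonical_character \<zeta> = \<alpha>) \<longleftrightarrow>
            (\<exists>c. \<zeta> = zeta_of \<phi> c \<alpha>)"
  proof (intro allI iffI)
    fix \<zeta> assume "lie_quasi_state \<phi> \<zeta> \<and> canonical_character \<zeta> = \<alpha>"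
    then show "\<exists>c. \<zeta> = zeta_of \<phi> c \<alpha>" using qs_forward[OF assms(1,3)] by blast
  next
    fix \<zeta> assume "\<exists>c. \<zeta> = zeta_of \<phi> c \<alpha>"
    then obtain c where "\<zeta> = zeta_of \<phi> c \<alpha>" by blast
    then show "lie_quasi_state \<phi> \<zeta> \<and> canonical_character \<zeta> = \<alpha>"
      using qs_backward[OF assms(1,3), of c] by simp
  qed
  show "\<forall>c. continuous_on UNIV (zeta_of \<phi> c \<alpha>) \<longleftrightarrow>
            (continuous_on (range \<phi>) c \<and>
             ((\<lambda>w. c w / norm w) \<longlongrightarrow> 0) (inf at_infinity (principal (range \<phi>))))"
  proof (intro allI iffI)
    fix c assume "continuous_on UNIV (zeta_of \<phi> c \<alpha>)"
    then show "continuous_on (range \<phi>) c \<and>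
             ((\<lambda>w. c w / norm w) \<longlongrightarrow> 0) (inf at_infinity (principal (range \<phi>)))"
      by (rule cont_forward[OF assms(1,3)])
  next
    fix c assume h: "continuous_on (range \<phi>) c \<and>
             ((\<lambda>w. c w / norm w) \<longlongrightarrow> 0) (inf at_infinity (principal (range \<phi>)))"
    show "continuous_on UNIV (zeta_of \<phi> c \<alpha>)"
      using cont_backward[OF assms(1,3)] h by blast
  qed
qed

end
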